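(* Let $m\neq\pm1$ be a square-free integer, $p$ a prime, $k$ a positive integer, $\alpha$ a root of $X^{p^k}-m$ and $M=\mathbb{Q}(\alpha)$. Let $r$ be the remainder of $m$ modulo $p^{k+1}$ and $s:=v_p(m^p-m)-1$. For $t\in\mathbb{N}$ let $$h^{(r)}_t(X):=X^{p^k-p^{k-t}}+rX^{p^k-2p^{k-t}}+\ldots+r^{p^t-2}X^{p^{k-t}}+r^{p^t-1}=\frac{X^{p^k}-r^{p^t}}{X^{p^{k-t}}-r}\in\mathbb{Z}[X].$$ Then for every integer $t$ with $0\leq t\leq \min\{s,k\}$, the element $\frac{1}{p^t}h^{(r)}_t(\alpha)\in\mathbb{Q}(\alpha)$ is an algebraic integer.
   Context: $v_p$ denotes the $p$-adic valuation on $\mathbb{Q}$. *)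

theory Defs
  imports Complex_Main "HOL-Computational_Algebra.Computational_Algebra"
begin

definition h_poly :: "int \<Rightarrow> nat \<Rightarrow> nat \<Rightarrow> nat \<Rightarrow> int poly" where
  "h_poly r p k t = (\<Sum>i<p ^ t. monom (r ^ i) ((p ^ t - 1 - i) * p ^ (k - t)))"

end

theory Submission
  imports Defs "HOL-Number_Theory.Cong"
begin

lemma binom_dvd:
  fixes p t j :: nat
  assumes p: "prime p" and j: "j < p ^ t"
  shows "p ^ t dvd (p ^ t choose Suc j) * p ^ j"
proof -
  define N where "N = p ^ t"
  have N0: "N > 0" using p by (simp add: N_def prime_gt_0_nat)
  have "Suc j * (N choose Suc j) = N * ((N - 1) choose j)"
    using Suc_times_binomial[of j "N - 1"] N0 by simp
  hence d1: "p ^ t dvd Suc j * (N choose Suc j)" by (simp add: N_def)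
  obtain q where q: "Suc j = p ^ multiplicity p (Suc j) * q" "\<not> p dvd q"
    using multiplicity_decompose'[of "Suc j" p] p by (metis nat.distinct(1) not_prime_unit)
  define a where "a = multiplicity p (Suc j)"
  have cop: "coprime (p ^ t) q"
    using p q(2) by (simp add: prime_imp_coprime coprime_power_left_iff)
  have "Suc j * (N choose Suc j) = q * (p ^ a * (N choose Suc j))"
    by (subst q(1)) (simp add: a_def mult_ac)
  with d1 have "p ^ t dvd q * (p ^ a * (N choose Suc j))" by simp
  hence d2: "p ^ t dvd p ^ a * (N choose Suc j)"
    using cop coprime_dvd_mult_right_iff by blast
  have "p ^ a dvd Suc j" using q(1) a_def by (metis dvd_triv_left)
  hence "p ^ a \<le> Suc j" by (intro dvd_imp_le) auto
  moreover have "a < p ^ a"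
    proof -
    have "2 \<le> p" using p prime_ge_2_nat by blast
    hence "2 ^ a \<le> p ^ a" by (rule power_mono) simp
    thus ?thesis using less_exp[of a] by linarith
  qed
  ultimately have "a \<le> j" by simp
  hence "p ^ a dvd p ^ j" by (simp add: le_imp_power_dvd)
  hence "p ^ a * (N choose Suc j) dvd (N choose Suc j) * p ^ j" by (simp add: mult.commute)
  with d2 show ?thesis unfolding N_def using dvd_trans by blast
qed


lemma map_poly_of_int_sum:
  "map_poly (of_int :: int \<Rightarrow> 'a :: comm_ring_1) (\<Sum>i\<in>A. f i) = (\<Sum>i\<in>A. map_poly of_int (f i))"
proof (induction A rule: infinite_finite_induct)
  case (insert x F)
  have "map_poly (of_int :: int \<Rightarrow> 'a) (f x + sum f F) = map_poly of_int (f x) + map_poly of_int (sum f F)"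
    by (simp add: poly_eq_iff coeff_map_poly)
  thus ?case using insert by simp
qed auto

theorem lemma3p1:
  fixes m :: int and p k t :: nat and \<alpha> :: complex
  assumes "squarefree m" and "m \<noteq> 1" and "m \<noteq> -1"
    and "prime p" and "k > 0"
    and "\<alpha> ^ (p ^ k) = of_int m"
    and "int t \<le> min (int (multiplicity (int p) (m ^ p - m)) - 1) (int k)"
  shows "algebraic_int
           (poly (map_poly of_int (h_poly (m mod (int p ^ (k + 1))) p k t)) \<alpha> / of_nat (p ^ t))"
proof -
  note p = assms(4)
  define N where "N = p ^ t"
  define r where "r = m mod (int p ^ (k + 1))"
  have N0: "N > 0" using p by (simp add: N_def prime_gt_0_nat)
  have tk: "t \<le> k" using assms(7) by simp
  have mlt: "t + 1 \<le> multiplicity (int p) (m ^ p - m)" using assms(7) by simp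
  have d0: "int p ^ (t + 1) dvd m ^ p - m" using multiplicity_dvd'[OF mlt] .
  hence c0: "[m ^ p = m] (mod int p ^ (t + 1))" by (simp add: cong_iff_dvd_diff)
  have c1: "[m ^ (p ^ i) = m] (mod int p ^ (t + 1))" for i
  proof (induction i)
    case 0 then show ?case by simp
  next
    case (Suc i)
    have "m ^ (p ^ Suc i) = (m ^ (p ^ i)) ^ p" by (metis power_Suc2 power_mult)
    moreover have "[(m ^ (p ^ i)) ^ p = m ^ p] (mod int p ^ (t + 1))" using Suc cong_pow by blast
    ultimately show ?case using c0 cong_trans by metis
  qed
  have "[r = m] (mod int p ^ (k + 1))" by (simp add: r_def cong_def)
  hence "[r ^ N = m ^ N] (mod int p ^ (k + 1))" by (rule cong_pow)
  moreover have "int p ^ (t + 1) dvd int p ^ (k + 1)" using tk by (simp add: le_imp_power_dvd)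
  ultimately have "[r ^ N = m ^ N] (mod int p ^ (t + 1))" using cong_dvd_modulus by blast
  hence "[r ^ N = m] (mod int p ^ (t + 1))" using c1[of t] cong_trans unfolding N_def by blast
  hence "[m = r ^ N] (mod int p ^ (t + 1))" by (rule cong_sym)
  hence "int p ^ (t + 1) dvd m - r ^ N" by (simp only: cong_iff_dvd_diff)
  then obtain c where "m - r ^ N = int p ^ (t + 1) * c" by blast
  define e where "e = int p * c"
  have e: "m - r ^ N = int N * e" using \<open>m - r ^ N = _\<close> by (simp add: e_def N_def mult_ac)
  have pe: "int p dvd e" by (simp add: e_def)
  have cint: "int N dvd int (N choose Suc j) * e ^ j" if "j < N" for j
  proof -
    have "p ^ t dvd (p ^ t choose Suc j) * p ^ j" using binom_dvd[OF p] that N_def by simp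
    hence "int N dvd int (N choose Suc j) * int p ^ j" unfolding N_def
      by (metis of_nat_dvd_iff of_nat_mult of_nat_power)
    moreover have "int p ^ j dvd e ^ j" using pe by (rule dvd_power_same)
    ultimately show ?thesis by (meson dvd_trans mult_dvd_mono dvd_refl)
  qed
  define \<beta> where "\<beta> = \<alpha> ^ (p ^ (k - t))"
  have \<beta>N: "\<beta> ^ N = of_int m"
  proof -
    have "\<beta> ^ N = \<alpha> ^ (p ^ (k - t) * p ^ t)" by (simp add: \<beta>_def N_def power_mult)
    also have "p ^ (k - t) * p ^ t = p ^ k" using tk by (simp flip: power_add)
    finally show ?thesis using assms(6) by simp
  qed
  define R :: complex where "R = of_int r"
  define h where "h = (\<Sum>i<N. R ^ i * \<beta> ^ (N - 1 - i))"
  have poly_eq: "poly (map_poly of_int (h_poly r p k t)) \<alpha> = h"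
    unfolding h_poly_def map_poly_of_int_sum poly_sum h_def N_def
  proof (intro sum.cong refl)
    fix i assume "i \<in> {..<p ^ t}"
    have "poly (map_poly of_int (monom (r ^ i) ((p ^ t - 1 - i) * p ^ (k - t)))) \<alpha>
        = R ^ i * \<alpha> ^ ((p ^ t - 1 - i) * p ^ (k - t))"
      by (simp add: map_poly_monom poly_monom R_def)
    also have "\<alpha> ^ ((p ^ t - 1 - i) * p ^ (k - t)) = \<beta> ^ (p ^ t - 1 - i)"
      by (simp add: \<beta>_def power_mult mult.commute)
    finally show "poly (map_poly of_int (monom (r ^ i) ((p ^ t - 1 - i) * p ^ (k - t)))) \<alpha>
        = R ^ i * \<beta> ^ (p ^ t - 1 - i)" .
  qed
  define W where "W = \<beta> - R"
  define H where "H = (\<Sum>j<N. of_nat (N choose Suc j) * R ^ (N - 1 - j) * W ^ j)"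
  have hW: "W * h = \<beta> ^ N - R ^ N"
  proof -
    have "R ^ N - \<beta> ^ N = (R - \<beta>) * (\<Sum>i<N. \<beta> ^ (N - Suc i) * R ^ i)"
      by (rule power_diff_sumr2)
    hence "\<beta> ^ N - R ^ N = (\<beta> - R) * (\<Sum>i<N. \<beta> ^ (N - Suc i) * R ^ i)"
      by (simp add: algebra_simps)
    thus ?thesis by (simp add: W_def h_def mult_ac)
  qed
  obtain n where n: "N = Suc n" using N0 gr0_implies_Suc by blast
  have HW: "W * H = \<beta> ^ N - R ^ N"
  proof -
    have "\<beta> ^ N = (W + R) ^ N" by (simp add: W_def)
    also have "\<dots> = (\<Sum>j\<le>N. of_nat (N choose j) * W ^ j * R ^ (N - j))"
      by (rule binomial_ring)
    also have "\<dots> = (\<Sum>j<Suc N. of_nat (N choose j) * W ^ j * R ^ (N - j))"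
      by (simp add: lessThan_Suc_atMost)
    also have "\<dots> = R ^ N + (\<Sum>j<N. of_nat (N choose Suc j) * W ^ Suc j * R ^ (N - Suc j))"
      by (subst sum.lessThan_Suc_shift) simp
    also have "(\<Sum>j<N. of_nat (N choose Suc j) * W ^ Suc j * R ^ (N - Suc j)) = W * H"
      unfolding H_def sum_distrib_left by (intro sum.cong refl) (simp add: mult_ac)
    finally show ?thesis by simp
  qed
  have hH: "h = H"
  proof (cases "W = 0")
    case False
    have "W * h = W * H" using hW HW by simp
    with False show ?thesis by (metis mult_left_cancel)
  next
    case True
    hence bR: "\<beta> = R" by (simp add: W_def)
    have "h = (\<Sum>i<N. R ^ (N - 1))"
      unfolding h_def bR by (intro sum.cong refl) (simp flip: power_add)
    also have "\<dots> = of_nat N * R ^ (N - 1)" by simp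
    finally have 1: "h = of_nat N * R ^ (N - 1)" .
    have "H = of_nat (N choose Suc 0) * R ^ (N - 1) * W ^ 0 + (\<Sum>j<n. of_nat (N choose Suc (Suc j)) * R ^ (N - 1 - Suc j) * W ^ Suc j)"
      unfolding H_def n by (subst sum.lessThan_Suc_shift) simp
    also have "\<dots> = of_nat N * R ^ (N - 1)" using True n by simp
    finally show ?thesis using 1 by simp
  qed
  define u where "u = h / of_nat N"
  have uW: "u * W = of_int e"
  proof -
    have "u * W = (W * h) / of_nat N" by (simp add: u_def)
    also have "W * h = of_int (m - r ^ N)" using hW \<beta>N by (simp add: R_def)
    also have "of_int (m - r ^ N) = (of_nat N * of_int e :: complex)" by (simp add: e)
    finally show ?thesis using N0 by simp
  qed
  define cc where "cc j = of_nat (N choose Suc j) * R ^ (N - 1 - j) * of_int e ^ j / (of_nat N :: complex)" for j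
  have ccint: "cc j \<in> \<int>" if jN: "j < N" for j
  proof -
    obtain q where q: "int (N choose Suc j) * e ^ j = int N * q" using cint[OF jN] by blast
    have "cc j = R ^ (N - 1 - j) * (of_int (int (N choose Suc j) * e ^ j) / of_nat N)"
      by (simp add: cc_def)
    also have "\<dots> = R ^ (N - 1 - j) * of_int q" unfolding q using N0 by simp
    finally show ?thesis by (simp add: R_def)
  qed
  have key: "u ^ N = (\<Sum>j<N. cc j * u ^ (N - 1 - j))"
  proof -
    have "u ^ N = u ^ (N - 1) * u" using n by simp
    also have "\<dots> = (\<Sum>j<N. of_nat (N choose Suc j) * R ^ (N - 1 - j) * W ^ j * u ^ (N - 1)) / of_nat N"
      by (simp add: u_def hH H_def sum_distrib_right mult_ac)
    also have "\<dots> = (\<Sum>j<N. cc j * u ^ (N - 1 - j))"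
      unfolding sum_divide_distrib
    proof (intro sum.cong refl)
      fix j assume "j \<in> {..<N}"
      hence "u ^ (N - 1) = u ^ j * u ^ (N - 1 - j)" by (simp flip: power_add)
      hence "W ^ j * u ^ (N - 1) = (u * W) ^ j * u ^ (N - 1 - j)" by (simp add: power_mult_distrib)
      thus "of_nat (N choose Suc j) * R ^ (N - 1 - j) * W ^ j * u ^ (N - 1) / of_nat N = cc j * u ^ (N - 1 - j)"
        unfolding uW cc_def by (simp add: mult_ac)
    qed
    finally show ?thesis .
  qed
  define Q where "Q = (\<Sum>j<N. monom (- cc j) (N - 1 - j))"
  define P where "P = monom 1 N + Q"
  have degQ: "degree Q < N" unfolding Q_def
    by (rule degree_sum_less) (use N0 in \<open>auto simp: degree_monom_le intro: le_less_trans[OF degree_monom_le]\<close>)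
  have degP: "degree P = N" unfolding P_def using degQ
    by (subst degree_add_eq_left) (auto simp: degree_monom_eq)
  have "lead_coeff P = 1" unfolding degP using degQ
    by (simp add: P_def coeff_eq_0)
  moreover have "\<forall>i. coeff P i \<in> \<int>"
  proof
    fix i
    have "coeff P i = (if N = i then 1 else 0) + (\<Sum>j<N. if N - 1 - j = i then - cc j else 0)"
      by (simp add: P_def Q_def coeff_sum coeff_monom)
    also have "\<dots> \<in> \<int>" using ccint by (intro Ints_add Ints_sum) auto
    finally show "coeff P i \<in> \<int>" .
  qed
  moreover have "poly P u = 0"
    using key by (simp add: P_def Q_def poly_sum poly_monom sum_negf)
  ultimately have "algebraic_int u" by (rule algebraic_int.intros)
  thus ?thesis using poly_eq by (simp add: u_def N_def r_def)
qed

end
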